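(* Let $\mathcal{L}^{\mu}\in\mathbb{C}^{p\times t}$ be nonzero with $\|\mathcal{L}^{\mu}\|_{\max}<1$, let $N\in\mathbb{N}$ and $\alpha>0$, and set $\beta_k=\beta_k(N)=\min\{(1.5)^k,(1.5)^N\}\cdot\frac{1.25}{\|\mathcal{L}^{\mu}\|_2}$. Consider the iteration $\mathcal{N}^0=0$, $Z^0=\mathcal{L}^{\mu}/\|\mathcal{L}^{\mu}\|_2$ and, for $k\ge0$, $$\mathcal{A}^{k+1}=M^k-\hat P_{\alpha/\beta_k}(M^k),\quad M^k=\tfrac1{\beta_k}Z^k-\mathcal{N}^k+\mathcal{L}^{\mu},$$ $$\mathcal{N}^{k+1}=U\,\mathrm{diag}\big(\max\{\sigma_i-\tfrac1{\beta_k},0\}\big)V^*\ \text{ where } \mathcal{L}^{\mu}-\mathcal{A}^{k+1}+\tfrac1{\beta_k}Z^k=U\,\mathrm{diag}(\sigma_i)V^*\ \text{(SVD)},$$ $$Z^{k+1}=Z^k-\beta_k(\mathcal{N}^{k+1}+\mathcal{A}^{k+1}-\mathcal{L}^{\mu}).$$ Suppose there are constants $p>0$ and $q\in(0,1)$ such that $\|\mathcal{L}^{\mu}-\mathcal{N}^r-\mathcal{A}^r\|_{\max}\le pq^r$ for all $r\ge1$. If $$\alpha>c(\mathcal{L}^{\mu}):=\frac{\|\mathcal{L}^{\mu}\|_{\max}}{\|\mathcal{L}^{\mu}\|_2}+\frac{1.25p}{\|\mathcal{L}^{\mu}\|_2}\cdot\frac{1-(1.5)^Nq^N}{1-1.5q}+\frac{\beta_N(N)\,p\,q^N}{1-q},$$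 then $\|\mathcal{A}^k\|_{\max}<1$ for all $k\in\mathbb{N}$ (so the deformations reconstructed from the columns of $\mathcal{A}^k$ are bijective).
   Context: $\|A\|_{\max}=\max_{i,j}|a_{ij}|$; $\|A\|_2$ is the spectral norm (largest singular value); $V^*$ is the conjugate transpose; $\hat P_{r}$ acts entrywise as the Euclidean projection of $\mathbb{C}$ onto the closed disk $\{z:|z|\le r\}$. This iteration is the ADMM scheme for $\min\|\mathcal{N}\|_*+\alpha\|\mathcal{A}\|_1$ subject to $\mathcal{N}+\mathcal{A}=\mathcal{L}^{\mu}$, where $\|\mathcal{A}\|_1=\sum_{i,j}|a_{ij}|$. *)

theory Defs
  imports "HOL-Analysis.Analysis"
begin

text \<open>Complex p x t matrices are represented as complex^'t^'p (rows indexed by 'p).\<close>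

definition max_norm :: "complex^'t^'p \<Rightarrow> real" where
  "max_norm A = Max (range (\<lambda>(i,j). cmod (A $ i $ j)))"

definition spec_norm :: "complex^'t^'p \<Rightarrow> real" where
  "spec_norm A = onorm (\<lambda>x. A *v x)"

definition disk_proj :: "real \<Rightarrow> complex \<Rightarrow> complex" where
  "disk_proj r z = (if cmod z \<le> r then z else complex_of_real (r / cmod z) * z)"

definition disk_proj_mat :: "real \<Rightarrow> complex^'t^'p \<Rightarrow> complex^'t^'p" where
  "disk_proj_mat r A = (\<chi> i j. disk_proj r (A $ i $ j))"

definition cinner :: "complex^'n \<Rightarrow> complex^'n \<Rightarrow> complex" where
  "cinner x y = (\<Sum>i\<in>UNIV. x $ i * cnj (y $ i))"

definition orthonormal_fam :: "nat \<Rightarrow> (nat \<Rightarrow> complex^'n) \<Rightarrow> bool" where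
  "orthonormal_fam r u \<longleftrightarrow> (\<forall>i<r. \<forall>j<r. cinner (u i) (u j) = (if i = j then 1 else 0))"

definition outer :: "complex^'p \<Rightarrow> complex^'t \<Rightarrow> complex^'t^'p" where
  "outer u v = (\<chi> a b. u $ a * cnj (v $ b))"

text \<open>Y is the singular value thresholding of X at level tau, computed from an SVD
  X = U diag(sigma_i) V^* (written as sum of sigma_i u_i v_i^* over i < min(p,t), with
  orthonormal columns u_i of U and v_i of V):  Y = U diag(max(sigma_i - tau, 0)) V^*.\<close>
definition svt_of :: "real \<Rightarrow> complex^'t^'p \<Rightarrow> complex^'t^'p \<Rightarrow> bool" where
  "svt_of tau X Y \<longleftrightarrow>
     (\<exists>(u :: nat \<Rightarrow> complex^'p) (v :: nat \<Rightarrow> complex^'t) (\<sigma> :: nat \<Rightarrow> real).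
        let r = min CARD('p) CARD('t) in
        orthonormal_fam r u \<and> orthonormal_fam r v \<and> (\<forall>i<r. \<sigma> i \<ge> 0) \<and>
        X = (\<Sum>i<r. \<sigma> i *\<^sub>R outer (u i) (v i)) \<and>
        Y = (\<Sum>i<r. max (\<sigma> i - tau) 0 *\<^sub>R outer (u i) (v i)))"

end

theory Submission
  imports Defs
begin

lemma mn_ge: "cmod (A $ i $ j) \<le> max_norm (A::complex^'t^'p)"
  unfolding max_norm_def by (rule Max_ge) (auto intro: image_eqI[where x="(i,j)"])

lemma mn_lt: assumes "\<And>i j. cmod (A $ i $ j) < c" shows "max_norm (A::complex^'t^'p) < c"
proof -
  have "max_norm A \<in> range (\<lambda>(i,j). cmod (A $ i $ j))"
    unfolding max_norm_def by (rule Max_in) auto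
  then show ?thesis using assms by auto
qed

lemma spec_pos: assumes "(L::complex^'t^'p) \<noteq> 0" shows "spec_norm L > 0"
proof -
  have "\<exists>i j. L $ i $ j \<noteq> 0"
  proof (rule ccontr)
    assume "\<not> (\<exists>i j. L $ i $ j \<noteq> 0)"
    hence "L = 0" by (simp add: vec_eq_iff)
    thus False using assms by simp
  qed
  then obtain i j where ij: "L $ i $ j \<noteq> 0" by blast
  have "(L *v axis j 1) $ i = L $ i $ j" by (simp add: matrix_vector_mult_def axis_def if_distrib sum.delta cong: if_cong)
  hence "L *v axis j 1 \<noteq> 0" using ij by auto
  thus ?thesis unfolding spec_norm_def
    by (subst onorm_pos_lt) (auto simp: matrix_vector_mul_bounded_linear)
qed

lemma disk_bound: assumes "r > 0" shows "cmod (m - disk_proj r m) \<le> max (cmod m - r) 0"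
proof (cases "cmod m \<le> r")
  case True thus ?thesis by (simp add: disk_proj_def)
next
  case False
  hence pos: "cmod m > 0" using assms by auto
  have "m - disk_proj r m = complex_of_real (1 - r / cmod m) * m"
    using False by (simp add: disk_proj_def algebra_simps)
  also have "cmod \<dots> = \<bar>1 - r / cmod m\<bar> * cmod m"
    by (simp only: norm_mult norm_of_real)
  also have "\<dots> = cmod m - r"
  proof -
    have "\<bar>1 - r / cmod m\<bar> = 1 - r / cmod m"
      using False pos by (simp add: field_simps)
    thus ?thesis using pos by (simp add: field_simps)
  qed
  finally show ?thesis by simp
qed


lemma scaleR_entry: "((c::real) *\<^sub>R (M::complex^'t^'p)) $ i $ j = complex_of_real c * M $ i $ j"
  by (simp only: vector_scaleR_component) (simp add: scaleR_conv_of_real)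

lemma cmod_lin: "c \<ge> 0 \<Longrightarrow> cmod (x + complex_of_real c * y) \<le> cmod x + c * cmod y"
proof -
  assume c: "c \<ge> 0"
  have "cmod (x + complex_of_real c * y) \<le> cmod x + cmod (complex_of_real c * y)" by (rule norm_triangle_ineq)
  also have "cmod (complex_of_real c * y) = c * cmod y" using c by (simp add: norm_mult)
  finally show ?thesis .
qed

lemma aux_arith: "(c::real) ^ j * d / s * pp * q ^ j = d * pp / s * (c * q) ^ j"
  by (simp add: power_mult_distrib)

lemma geo_part:
  fixes q b c :: real and f :: "nat \<Rightarrow> real"
  assumes q: "0 < q" "q < 1" and b: "b \<ge> 0"
    and f: "\<And>j. j \<ge> NN \<Longrightarrow> f j = b * q ^ j"
  shows "(\<Sum>j<NN + m. f j) \<le> (\<Sum>j<NN. f j) + b * q ^ NN / (1 - q)"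
proof -
  have "(\<Sum>j<NN + m. f j) = (\<Sum>j<NN. f j) + b * q ^ NN * (1 - q ^ m) / (1 - q)"
  proof (induction m)
    case 0 then show ?case by simp
  next
    case (Suc m)
    have "(\<Sum>j<NN + Suc m. f j) = (\<Sum>j<NN + m. f j) + b * q ^ (NN + m)"
      using f[of "NN+m"] by simp
    also have "\<dots> = (\<Sum>j<NN. f j) + b * q ^ NN * (1 - q ^ Suc m) / (1 - q)"
      using Suc q by (simp add: field_simps power_add)
    finally show ?case .
  qed
  also have "\<dots> \<le> (\<Sum>j<NN. f j) + b * q ^ NN / (1 - q)"
  proof -
    have "b * q ^ NN * (1 - q ^ m) \<le> b * q ^ NN"
      using q b by (simp add: mult_left_le)
    thus ?thesis using q by (simp add: divide_right_mono)
  qed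
  finally show ?thesis .
qed

theorem theorem7:
  fixes L :: "complex^'t^'p"
    and NN :: nat and \<alpha> :: real and pp q :: real
    and \<beta> :: "nat \<Rightarrow> real"
    and Nm A Z :: "nat \<Rightarrow> complex^'t^'p"
  assumes L_nz: "L \<noteq> 0"
    and L_max: "max_norm L < 1"
    and alpha_pos: "\<alpha> > 0"
    and beta_def: "\<And>k. \<beta> k = min (1.5 ^ k) (1.5 ^ NN) * 1.25 / spec_norm L"
    and N0: "Nm 0 = 0"
    and Z0: "Z 0 = (1 / spec_norm L) *\<^sub>R L"
    and A_step: "\<And>k. A (Suc k) =
        ((1 / \<beta> k) *\<^sub>R Z k - Nm k + L) - disk_proj_mat (\<alpha> / \<beta> k) ((1 / \<beta> k) *\<^sub>R Z k - Nm k + L)"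
    and N_step: "\<And>k. svt_of (1 / \<beta> k) (L - A (Suc k) + (1 / \<beta> k) *\<^sub>R Z k) (Nm (Suc k))"
    and Z_step: "\<And>k. Z (Suc k) = Z k - \<beta> k *\<^sub>R (Nm (Suc k) + A (Suc k) - L)"
    and pp_pos: "pp > 0" and q_pos: "0 < q" and q_lt1: "q < 1"
    and residual: "\<And>r. r \<ge> 1 \<Longrightarrow> max_norm (L - Nm r - A r) \<le> pp * q ^ r"
    and alpha_big: "\<alpha> > max_norm L / spec_norm L
        + 1.25 * pp / spec_norm L * (\<Sum>j<NN. (1.5 * q) ^ j)
        + \<beta> NN * pp * q ^ NN / (1 - q)"
  shows "\<forall>k\<ge>1. max_norm (A k) < 1"
proof -
  define s where "s = spec_norm L"
  have s_pos: "s > 0" unfolding s_def by (rule spec_pos[OF L_nz])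
  have beta_pos: "\<beta> k > 0" for k
  proof -
    have "min ((1.5::real) ^ k) (1.5 ^ NN) > 0"
      using zero_less_power[of "1.5::real" k] zero_less_power[of "1.5::real" NN]
      by (simp only: min_less_iff_conj)
    thus ?thesis unfolding beta_def[of k] using s_pos s_def
      by (intro divide_pos_pos mult_pos_pos) auto
  qed
  define e where "e k = L - Nm k - A k" for k
  have e_b: "cmod (e k $ i $ j) \<le> pp * q ^ k" if "k \<ge> 1" for k i j
    using mn_ge[of "e k" i j] residual[OF that] unfolding e_def by (rule order_trans)
  define Zb where "Zb k = max_norm L / s + (\<Sum>j<k. \<beta> j * (pp * q ^ Suc j))" for k
  have Zbound: "cmod (Z k $ i $ j) \<le> Zb k" for k i j
  proof (induction k)
    case 0
    have "Z 0 $ i $ j = complex_of_real (1 / s) * L $ i $ j"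
      unfolding Z0 s_def by (rule scaleR_entry)
    hence "cmod (Z 0 $ i $ j) = cmod (L $ i $ j) / s"
      using s_pos by (simp add: norm_mult norm_divide)
    also have "\<dots> \<le> max_norm L / s" using mn_ge[of L i j] s_pos by (simp add: divide_right_mono)
    finally show ?case by (simp add: Zb_def)
  next
    case (Suc k)
    have "Z (Suc k) = Z k + \<beta> k *\<^sub>R e (Suc k)"
    proof -
      have "Nm (Suc k) + A (Suc k) - L = - e (Suc k)" by (simp add: e_def)
      thus ?thesis using Z_step[of k] by simp
    qed
    hence "Z (Suc k) $ i $ j = Z k $ i $ j + complex_of_real (\<beta> k) * e (Suc k) $ i $ j"
      by (simp, simp add: scaleR_conv_of_real)
    hence "cmod (Z (Suc k) $ i $ j) \<le> cmod (Z k $ i $ j) + \<beta> k * cmod (e (Suc k) $ i $ j)"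
      using beta_pos[of k] cmod_lin[of "\<beta> k" "Z k $ i $ j" "e (Suc k) $ i $ j"] by simp
    also have "\<dots> \<le> Zb k + \<beta> k * (pp * q ^ Suc k)"
      using Suc e_b[of "Suc k" i j] beta_pos[of k] by (intro add_mono mult_left_mono) auto
    finally show ?case by (simp add: Zb_def)
  qed
  define T where "T = 1.25 * pp / s * (\<Sum>j<NN. (1.5 * q) ^ j) + \<beta> NN * pp * q ^ NN / (1 - q)"
  define f where "f j = \<beta> j * pp * q ^ j" for j
  have f_nn: "f j \<ge> 0" for j
    unfolding f_def using beta_pos[of j] pp_pos q_pos
    by (intro mult_nonneg_nonneg zero_le_power) auto
  have f_lo: "f j = 1.25 * pp / s * (1.5 * q) ^ j" if "j < NN" for j
  proof -
    have "(1.5::real) ^ j \<le> 1.5 ^ NN"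
      by (rule power_increasing) (use that in auto)
    hence m: "min ((1.5::real) ^ j) (1.5 ^ NN) = 1.5 ^ j" by (rule min_absorb1)
    have b: "\<beta> j = 1.5 ^ j * 1.25 / s" unfolding beta_def[of j] m s_def by (rule refl)
    show ?thesis unfolding f_def b by (rule aux_arith)
  qed
  have f_hi: "f j = \<beta> NN * pp * q ^ j" if "j \<ge> NN" for j
  proof -
    have "(1.5::real) ^ NN \<le> 1.5 ^ j"
      by (rule power_increasing) (use that in auto)
    hence m: "min ((1.5::real) ^ j) (1.5 ^ NN) = 1.5 ^ NN" by (rule min_absorb2)
    have "\<beta> j = \<beta> NN" unfolding beta_def[of j] beta_def[of NN] m by (simp only: min.idem)
    thus ?thesis unfolding f_def by (rule arg_cong)
  qed
  have sumT: "(\<Sum>j<n. f j) \<le> T" for n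
  proof -
    have "(\<Sum>j<NN. f j) = (\<Sum>j<NN. 1.25 * pp / s * (1.5 * q) ^ j)"
      by (rule sum.cong) (use f_lo in auto)
    hence lo: "(\<Sum>j<NN. f j) = 1.25 * pp / s * (\<Sum>j<NN. (1.5 * q) ^ j)"
      by (simp only: sum_distrib_left)
    have tnn: "\<beta> NN * pp * q ^ NN / (1 - q) \<ge> 0"
      using beta_pos[of NN] pp_pos q_pos q_lt1
      by (intro divide_nonneg_nonneg mult_nonneg_nonneg zero_le_power) auto
    show ?thesis
    proof (cases "n \<le> NN")
      case True
      have "(\<Sum>j<n. f j) \<le> (\<Sum>j<NN. f j)"
        using True f_nn by (intro sum_mono2) auto
      thus ?thesis unfolding T_def using lo tnn by linarith
    next
      case False
      then obtain m where n: "n = NN + m" by (metis le_add_diff_inverse nat_le_linear)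
      have "(\<Sum>j<NN + m. f j) \<le> (\<Sum>j<NN. f j) + (\<beta> NN * pp) * q ^ NN / (1 - q)"
        by (rule geo_part) (use q_pos q_lt1 beta_pos[of NN] pp_pos f_hi in auto)
      thus ?thesis unfolding T_def n using lo by linarith
    qed
  qed
  have aT: "max_norm L / s + T < \<alpha>" using alpha_big unfolding T_def s_def by linarith
  have keyb: "Zb k + \<beta> k * pp * q ^ k < \<alpha>" for k
  proof -
    have "(\<Sum>j<k. \<beta> j * (pp * q ^ Suc j)) \<le> (\<Sum>j<k. f j)"
    proof (rule sum_mono)
      fix j
      have "q ^ Suc j \<le> q ^ j" using q_pos q_lt1 by (simp add: power_decreasing)
      thus "\<beta> j * (pp * q ^ Suc j) \<le> f j"
        using beta_pos[of j] pp_pos unfolding f_def by (simp add: mult_left_mono)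
    qed
    moreover have "(\<Sum>j<Suc k. f j) = (\<Sum>j<k. f j) + \<beta> k * pp * q ^ k"
      unfolding f_def by (rule sum.lessThan_Suc)
    moreover have "(\<Sum>j<Suc k. f j) \<le> T" by (rule sumT)
    ultimately show ?thesis using aT unfolding Zb_def by linarith
  qed
  have step: "max_norm (A (Suc k)) < 1" if hyp: "k = 0 \<or> max_norm (A k) < 1" for k
  proof (rule mn_lt)
    fix i j
    have LN: "cmod ((L - Nm k) $ i $ j) < 1 + pp * q ^ k"
    proof (cases "k = 0")
      case True
      thus ?thesis using N0 mn_ge[of L i j] L_max pp_pos by simp
    next
      case False
      have "(L - Nm k) $ i $ j = e k $ i $ j + A k $ i $ j" using e_def by simp
      hence "cmod ((L - Nm k) $ i $ j) \<le> cmod (e k $ i $ j) + cmod (A k $ i $ j)"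
        by (metis norm_triangle_ineq)
      moreover have "cmod (A k $ i $ j) < 1" using hyp False mn_ge[of "A k" i j] by simp
      moreover have "cmod (e k $ i $ j) \<le> pp * q ^ k" using e_b False by simp
      ultimately show ?thesis by simp
    qed
    define m where "m = ((1 / \<beta> k) *\<^sub>R Z k - Nm k + L) $ i $ j"
    have Aij: "A (Suc k) $ i $ j = m - disk_proj (\<alpha> / \<beta> k) m"
      using A_step[of k] m_def by (simp add: disk_proj_mat_def)
    have "m = (L - Nm k) $ i $ j + complex_of_real (1 / \<beta> k) * Z k $ i $ j"
      using m_def by (simp, simp add: scaleR_conv_of_real)
    hence "cmod m \<le> cmod ((L - Nm k) $ i $ j) + (1 / \<beta> k) * cmod (Z k $ i $ j)"
      using beta_pos[of k] cmod_lin[of "1 / \<beta> k" "(L - Nm k) $ i $ j" "Z k $ i $ j"] by simp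
    also have "\<dots> < Zb k / \<beta> k + 1 + pp * q ^ k"
    proof -
      have "(1 / \<beta> k) * cmod (Z k $ i $ j) \<le> (1 / \<beta> k) * Zb k"
        using Zbound[of k i j] beta_pos[of k] by (intro mult_left_mono) auto
      thus ?thesis using LN by simp
    qed
    also have "\<dots> = (Zb k + \<beta> k * pp * q ^ k) / \<beta> k + 1"
      using beta_pos[of k] by (simp add: field_simps)
    also have "\<dots> \<le> \<alpha> / \<beta> k + 1"
      using keyb[of k] beta_pos[of k] by (simp add: divide_right_mono)
    finally have "cmod m < \<alpha> / \<beta> k + 1" .
    moreover have "\<alpha> / \<beta> k > 0" using alpha_pos beta_pos[of k] by simp
    ultimately show "cmod (A (Suc k) $ i $ j) < 1"
      using Aij disk_bound[of "\<alpha> / \<beta> k" m] by simp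
  qed
  have all: "max_norm (A (Suc k)) < 1" for k
    by (induction k) (use step in auto)
  show ?thesis
  proof (intro allI impI)
    fix k :: nat assume "k \<ge> 1"
    then obtain k' where "k = Suc k'" by (cases k) auto
    thus "max_norm (A k) < 1" using all by simp
  qed
qed

end
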